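(* Any finite product of matrices from the set $\{A_{(0,0)},A_{(1,0)},A_{(0,1)},A_{(1,1)}\}$ has at most one row all of whose entries are zero.
   Context: $A_{(0,0)}=\begin{pmatrix}3&1&1&1\\0&1&0&0\\0&0&1&0\\0&0&0&1\end{pmatrix}$, $A_{(1,0)}=\begin{pmatrix}1&0&1&0\\1&3&0&1\\0&0&0&0\\0&0&1&1\end{pmatrix}$, $A_{(0,1)}=\begin{pmatrix}1&1&0&0\\0&0&0&0\\1&0&3&1\\0&1&0&1\end{pmatrix}$, $A_{(1,1)}=\begin{pmatrix}1&0&0&0\\0&1&0&0\\0&0&1&0\\1&1&1&3\end{pmatrix}$. *)

theory Defs
  imports "Jordan_Normal_Form.Matrix"
begin

definition A00 :: "int mat" where
  "A00 = mat_of_rows_list 4 [[3,1,1,1],[0,1,0,0],[0,0,1,0],[0,0,0,1]]"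
definition A10 :: "int mat" where
  "A10 = mat_of_rows_list 4 [[1,0,1,0],[1,3,0,1],[0,0,0,0],[0,0,1,1]]"
definition A01 :: "int mat" where
  "A01 = mat_of_rows_list 4 [[1,1,0,0],[0,0,0,0],[1,0,3,1],[0,1,0,1]]"
definition A11 :: "int mat" where
  "A11 = mat_of_rows_list 4 [[1,0,0,0],[0,1,0,0],[0,0,1,0],[1,1,1,3]]"

definition prod_mats :: "int mat list \<Rightarrow> int mat" where
  "prod_mats Ms = foldr (*) Ms (1\<^sub>m 4)"

definition zero_rows :: "int mat \<Rightarrow> nat set" where
  "zero_rows M = {i. i < dim_row M \<and> (\<forall>j < dim_col M. M $$ (i, j) = 0)}"

end

theory Submission
  imports Defs
begin

definition nonneg4 :: "int mat \<Rightarrow> bool" where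
  "nonneg4 M = (M \<in> carrier_mat 4 4 \<and> (\<forall>i<4. \<forall>j<4. M $$ (i,j) \<ge> 0))"

definition uniq :: "nat set \<Rightarrow> bool" where
  "uniq Z = (\<forall>a\<in>Z. \<forall>b\<in>Z. a = b)"

lemma zr_char:
  assumes "nonneg4 M" "nonneg4 Q"
  shows "i \<in> zero_rows (M * Q) \<longleftrightarrow>
     i < 4 \<and> (\<forall>k<4. M $$ (i,k) \<noteq> 0 \<longrightarrow> k \<in> zero_rows Q)"
proof -
  have M: "M \<in> carrier_mat 4 4" and Q: "Q \<in> carrier_mat 4 4"
    using assms by (auto simp: nonneg4_def)
  have e: "(M*Q) $$ (i,j) = (\<Sum>k\<in>{0..<4}. M $$ (i,k) * Q $$ (k,j))" if "i<4" "j<4" for i j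
    using M Q that by (simp add: scalar_prod_def)
  have z: "(\<Sum>k\<in>{0..<4}. M $$ (i,k) * Q $$ (k,j)) = 0 \<longleftrightarrow> (\<forall>k<4. M $$ (i,k) * Q $$ (k,j) = 0)"
    if "i<4" "j<4" for i j
    using assms that by (subst sum_nonneg_eq_0_iff) (auto simp: nonneg4_def)
  have d: "dim_row (M*Q) = 4" "dim_col (M*Q) = 4" using M Q by auto
  have "i \<in> zero_rows (M * Q) \<longleftrightarrow> i < 4 \<and> (\<forall>j<4. \<forall>k<4. M $$ (i,k) * Q $$ (k,j) = 0)"
    unfolding zero_rows_def d using e z by (auto simp del: index_mult_mat mult_eq_0_iff)
  then show ?thesis unfolding zero_rows_def using Q by auto
qed

lemma nonneg_mult: "nonneg4 M \<Longrightarrow> nonneg4 Q \<Longrightarrow> nonneg4 (M * Q)"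
  unfolding nonneg4_def
  by (auto simp: index_mult_mat scalar_prod_def row_def col_def intro!: sum_nonneg)

lemma entries:
  "A00 \<in> carrier_mat 4 4" "A10 \<in> carrier_mat 4 4" "A01 \<in> carrier_mat 4 4" "A11 \<in> carrier_mat 4 4"
  "i<4 \<Longrightarrow> j<4 \<Longrightarrow> A00 $$ (i,j) = [[3,1,1,1],[0,1,0,0],[0,0,1,0],[0,0,0,1]] ! i ! j"
  "i<4 \<Longrightarrow> j<4 \<Longrightarrow> A10 $$ (i,j) = [[1,0,1,0],[1,3,0,1],[0,0,0,0],[0,0,1,1]] ! i ! j"
  "i<4 \<Longrightarrow> j<4 \<Longrightarrow> A01 $$ (i,j) = [[1,1,0,0],[0,0,0,0],[1,0,3,1],[0,1,0,1]] ! i ! j"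
  "i<4 \<Longrightarrow> j<4 \<Longrightarrow> A11 $$ (i,j) = [[1,0,0,0],[0,1,0,0],[0,0,1,0],[1,1,1,3]] ! i ! j"
  by (auto simp: A00_def A10_def A01_def A11_def mat_of_rows_list_def)

lemma less4: "(i::nat) < 4 \<longleftrightarrow> i = 0 \<or> i = 1 \<or> i = 2 \<or> i = 3" by auto

lemma gens_nonneg: "M \<in> {A00, A10, A01, A11} \<Longrightarrow> nonneg4 M"
  unfolding nonneg4_def by (auto simp: entries less4)

lemma rowsup:
  assumes "nonneg4 M" "nonneg4 Q" "i \<in> zero_rows (M * Q)" "k < 4" "M $$ (i,k) \<noteq> 0"
  shows "k \<in> zero_rows Q"
  using zr_char[OF assms(1,2)] assms(3-5) by blast

lemma zr_lt: "nonneg4 M \<Longrightarrow> nonneg4 Q \<Longrightarrow> i \<in> zero_rows (M * Q) \<Longrightarrow> i < 4"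
  using zr_char by blast

lemma step_cases:
  assumes "M \<in> {A00, A10, A01, A11}" "nonneg4 Q" "uniq (zero_rows Q)" "i \<in> zero_rows (M * Q)"
  shows "(M = A00 \<and> i \<in> zero_rows Q) \<or> (M = A11 \<and> i \<in> zero_rows Q) \<or> (M = A10 \<and> i = 2) \<or> (M = A01 \<and> i = 1)"
proof -
  have nM: "nonneg4 M" using assms(1) by (rule gens_nonneg)
  note R = rowsup[OF nM assms(2) assms(4)]
  have i4: "i < 4" using zr_lt[OF nM assms(2) assms(4)] .
  have U: "\<And>a b. a \<in> zero_rows Q \<Longrightarrow> b \<in> zero_rows Q \<Longrightarrow> a = b" using assms(3) by (auto simp: uniq_def)
  consider "M = A00" | "M = A10" | "M = A01" | "M = A11" using assms(1) by blast
  then show ?thesis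
  proof cases
    case 1
    have "i \<noteq> 0"
    proof
      assume "i = 0"
      then have "0 \<in> zero_rows Q" "1 \<in> zero_rows Q" using R[of 0] R[of 1] 1 by (simp_all add: entries)
      then show False using U by force
    qed
    then show ?thesis using i4 1 R[of i] by (auto simp: entries less4)
  next
    case 4
    have "i \<noteq> 3"
    proof
      assume "i = 3"
      then have "0 \<in> zero_rows Q" "1 \<in> zero_rows Q" using R[of 0] R[of 1] 4 by (simp_all add: entries)
      then show False using U by force
    qed
    then show ?thesis using i4 4 R[of i] by (auto simp: entries less4)
  next
    case 2
    have "i \<noteq> 0"
    proof
      assume "i = 0"
      then have "0 \<in> zero_rows Q" "2 \<in> zero_rows Q" using R[of 0] R[of 2] 2 by (simp_all add: entries)
      then show False using U by force
    qed
    moreover have "i \<noteq> 1"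
    proof
      assume "i = 1"
      then have "0 \<in> zero_rows Q" "1 \<in> zero_rows Q" using R[of 0] R[of 1] 2 by (simp_all add: entries)
      then show False using U by force
    qed
    moreover have "i \<noteq> 3"
    proof
      assume "i = 3"
      then have "2 \<in> zero_rows Q" "3 \<in> zero_rows Q" using R[of 2] R[of 3] 2 by (simp_all add: entries)
      then show False using U by force
    qed
    ultimately show ?thesis using i4 2 by (auto simp: less4)
  next
    case 3
    have "i \<noteq> 0"
    proof
      assume "i = 0"
      then have "0 \<in> zero_rows Q" "1 \<in> zero_rows Q" using R[of 0] R[of 1] 3 by (simp_all add: entries)
      then show False using U by force
    qed
    moreover have "i \<noteq> 2"
    proof
      assume "i = 2"
      then have "0 \<in> zero_rows Q" "2 \<in> zero_rows Q" using R[of 0] R[of 2] 3 by (simp_all add: entries)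
      then show False using U by force
    qed
    moreover have "i \<noteq> 3"
    proof
      assume "i = 3"
      then have "1 \<in> zero_rows Q" "3 \<in> zero_rows Q" using R[of 1] R[of 3] 3 by (simp_all add: entries)
      then show False using U by force
    qed
    ultimately show ?thesis using i4 3 by (auto simp: less4)
  qed
qed

lemma gens_distinct: "A00 \<noteq> A10" "A00 \<noteq> A01" "A00 \<noteq> A11" "A10 \<noteq> A01" "A10 \<noteq> A11" "A01 \<noteq> A11"
proof -
  have d: "A \<noteq> B" if "A $$ (0,0) \<noteq> B $$ (0,0) \<or> A $$ (1,1) \<noteq> B $$ (1,1) \<or> A $$ (2,2) \<noteq> B $$ (2,2)" for A B :: "int mat"
    using that by auto
  show "A00 \<noteq> A10" "A00 \<noteq> A01" "A00 \<noteq> A11" "A10 \<noteq> A01" "A10 \<noteq> A11" "A01 \<noteq> A11"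
    by (rule d; simp add: entries)+
qed

lemma step:
  assumes "M \<in> {A00, A10, A01, A11}" "nonneg4 Q" "uniq (zero_rows Q)"
  shows "uniq (zero_rows (M * Q))"
  unfolding uniq_def
proof (intro ballI)
  fix a b assume a: "a \<in> zero_rows (M * Q)" and b: "b \<in> zero_rows (M * Q)"
  note A = step_cases[OF assms a] and B = step_cases[OF assms b]
  have U: "\<And>a b. a \<in> zero_rows Q \<Longrightarrow> b \<in> zero_rows Q \<Longrightarrow> a = b" using assms(3) by (auto simp: uniq_def)
  show "a = b" using A B U gens_distinct by metis
qed

lemma main:
  assumes "set Ms \<subseteq> {A00, A10, A01, A11}"
  shows "nonneg4 (prod_mats Ms) \<and> uniq (zero_rows (prod_mats Ms))"
  using assms
proof (induction Ms)
  case Nil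
  have "zero_rows (1\<^sub>m 4 :: int mat) = {}"
    by (auto simp: zero_rows_def)
  then show ?case by (auto simp: prod_mats_def nonneg4_def uniq_def)
next
  case (Cons M Ms)
  then have IH: "nonneg4 (prod_mats Ms)" "uniq (zero_rows (prod_mats Ms))" and M: "M \<in> {A00, A10, A01, A11}"
    by auto
  have p: "prod_mats (M # Ms) = M * prod_mats Ms" by (simp add: prod_mats_def)
  show ?case unfolding p using nonneg_mult[OF gens_nonneg[OF M] IH(1)] step[OF M IH] by simp
qed

theorem lemma7p2:
  fixes Ms :: "int mat list"
  assumes "set Ms \<subseteq> {A00, A10, A01, A11}"
  shows "card (zero_rows (prod_mats Ms)) \<le> 1"
proof -
  let ?Z = "zero_rows (prod_mats Ms)"
  have u: "uniq ?Z" using main[OF assms] by simp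
  show ?thesis
  proof (cases "?Z = {}")
    case True then show ?thesis by simp
  next
    case False
    then obtain a where "a \<in> ?Z" by blast
    with u have "?Z = {a}" unfolding uniq_def by blast
    then show ?thesis by simp
  qed
qed

end
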